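(* Let $N\ge2$ and let $\phi:\mathbb{R}_{\ge0}\to\mathbb{R}$ be continuous. Then the DKPP $P_\phi(\cdot;\bm{L})$ is log-modular for every $N\times N$ positive semidefinite Hermitian matrix $\bm{L}$ if and only if $\phi$ is affine, i.e. $\phi(x)=bx+c$ for some $b,c\in\mathbb{R}$. (In particular, if $\phi$ is affine then $P_\phi(\cdot;\bm{L})$ is log-modular for every such $\bm{L}$.)
   Context: Let $\mathcal{Y}=\{1,\dots,N\}$. For $\mathcal{A}\subseteq\mathcal{Y}$, $\bm{L}[\mathcal{A}]=(L_{ij})_{i,j\in\mathcal{A}}$ denotes the principal submatrix. For a function $\phi$ and a Hermitian matrix $\bm{X}=\bm{U}\mathrm{diag}(\mu_1,\dots,\mu_k)\bm{U}^*$, $\phi(\bm{X})=\bm{U}\mathrm{diag}(\phi(\mu_1),\dots,\phi(\mu_k))\bm{U}^*$. Given a continuous $\phi:\mathbb{R}_{\ge0}\to\mathbb{R}$ and an $N\times N$ positive semidefinite Hermitian $\bm{L}$, the DKPP is $P_\phi(\mathcal{A};\bm{L})=\exp(\operatorname{tr}\phi(\bm{L}[\mathcal{A}]))/Z_\phi(\bm{L})$ with $Z_\phi(\bm{L})=\sum_{\mathcal{B}\subseteq\mathcal{Y}}\exp(\operatorname{tr}\phi(\bm{L}[\mathcal{B}]))$ and $\operatorname{tr}\phi$ of the empty matrix equal to $0$. A set function $f:2^{\mathcal{Y}}\to\mathbb{R}$ is modular if $f(\mathcal{S})+f(\mathcal{T})=f(\mathcal{S}\cup\mathcal{T})+f(\mathcal{S}\cap\mathcal{T})$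 for all $\mathcal{S},\mathcal{T}\subseteq\mathcal{Y}$; a positive function $P$ is log-modular if $\log P$ is modular. *)

theory Defs
  imports "HOL-Analysis.Analysis"
begin

text \<open>Matrices are represented as functions nat => nat => complex; a matrix
  indexed by a finite set A (e.g. A = {1..N} or a principal submatrix L[A])
  is such a function where only entries with both indices in A matter.\<close>

definition hermitian_on :: "nat set \<Rightarrow> (nat \<Rightarrow> nat \<Rightarrow> complex) \<Rightarrow> bool" where
  "hermitian_on A L \<longleftrightarrow> (\<forall>i\<in>A. \<forall>j\<in>A. L i j = cnj (L j i))"

definition psd_hermitian_on :: "nat set \<Rightarrow> (nat \<Rightarrow> nat \<Rightarrow> complex) \<Rightarrow> bool" where
  "psd_hermitian_on A L \<longleftrightarrow> hermitian_on A L \<and>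
     (\<forall>x :: nat \<Rightarrow> complex. Re (\<Sum>i\<in>A. \<Sum>j\<in>A. cnj (x i) * L i j * x j) \<ge> 0)"

definition unitary_on :: "nat set \<Rightarrow> (nat \<Rightarrow> nat \<Rightarrow> complex) \<Rightarrow> bool" where
  "unitary_on A U \<longleftrightarrow> (\<forall>i\<in>A. \<forall>j\<in>A. (\<Sum>k\<in>A. cnj (U k i) * U k j) = (if i = j then 1 else 0))"

definition spectral_decomp_on ::
  "nat set \<Rightarrow> (nat \<Rightarrow> nat \<Rightarrow> complex) \<Rightarrow> (nat \<Rightarrow> nat \<Rightarrow> complex) \<Rightarrow> (nat \<Rightarrow> real) \<Rightarrow> bool" where
  "spectral_decomp_on A X U mu \<longleftrightarrow> unitary_on A U \<and>
     (\<forall>i\<in>A. \<forall>j\<in>A. X i j = (\<Sum>k\<in>A. U i k * complex_of_real (mu k) * cnj (U j k)))"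

definition mat_fun_on ::
  "(real \<Rightarrow> real) \<Rightarrow> nat set \<Rightarrow> (nat \<Rightarrow> nat \<Rightarrow> complex) \<Rightarrow> (nat \<Rightarrow> nat \<Rightarrow> complex)" where
  "mat_fun_on phi A X = (SOME F. \<exists>U mu. spectral_decomp_on A X U mu \<and>
     (\<forall>i\<in>A. \<forall>j\<in>A. F i j = (\<Sum>k\<in>A. U i k * complex_of_real (phi (mu k)) * cnj (U j k))))"

text \<open>tr phi(L[A]); the trace of a Hermitian matrix is real. For A = {} it is 0.\<close>
definition tr_fun :: "(real \<Rightarrow> real) \<Rightarrow> (nat \<Rightarrow> nat \<Rightarrow> complex) \<Rightarrow> nat set \<Rightarrow> real" where
  "tr_fun phi L A = Re (\<Sum>i\<in>A. mat_fun_on phi A L i i)"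

definition Z_phi :: "(real \<Rightarrow> real) \<Rightarrow> nat \<Rightarrow> (nat \<Rightarrow> nat \<Rightarrow> complex) \<Rightarrow> real" where
  "Z_phi phi N L = (\<Sum>B\<in>Pow {1..N}. exp (tr_fun phi L B))"

definition dkpp :: "(real \<Rightarrow> real) \<Rightarrow> nat \<Rightarrow> (nat \<Rightarrow> nat \<Rightarrow> complex) \<Rightarrow> nat set \<Rightarrow> real" where
  "dkpp phi N L A = exp (tr_fun phi L A) / Z_phi phi N L"

definition modular_on :: "'a set \<Rightarrow> ('a set \<Rightarrow> real) \<Rightarrow> bool" where
  "modular_on Y f \<longleftrightarrow> (\<forall>S\<subseteq>Y. \<forall>T\<subseteq>Y. f S + f T = f (S \<union> T) + f (S \<inter> T))"

definition log_modular_on :: "'a set \<Rightarrow> ('a set \<Rightarrow> real) \<Rightarrow> bool" where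
  "log_modular_on Y P \<longleftrightarrow> (\<forall>S\<subseteq>Y. P S > 0) \<and> modular_on Y (\<lambda>S. ln (P S))"

end

theory Submission
  imports Defs "Jordan_Normal_Form.Spectral_Radius"
begin

definition mm :: "nat set \<Rightarrow> (nat\<Rightarrow>nat\<Rightarrow>complex) \<Rightarrow> (nat\<Rightarrow>nat\<Rightarrow>complex) \<Rightarrow> nat\<Rightarrow>nat\<Rightarrow>complex" where
  "mm A X Y = (\<lambda>i j. \<Sum>k\<in>A. X i k * Y k j)"
definition adj :: "(nat\<Rightarrow>nat\<Rightarrow>complex) \<Rightarrow> nat\<Rightarrow>nat\<Rightarrow>complex" where
  "adj X = (\<lambda>i j. cnj (X j i))"
definition idm :: "nat\<Rightarrow>nat\<Rightarrow>complex" where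
  "idm = (\<lambda>i j. if i = j then 1 else 0)"
definition dg :: "(nat \<Rightarrow> real) \<Rightarrow> nat\<Rightarrow>nat\<Rightarrow>complex" where
  "dg mu = (\<lambda>i j. if i = j then complex_of_real (mu i) else 0)"
definition eqon :: "nat set \<Rightarrow> (nat\<Rightarrow>nat\<Rightarrow>complex) \<Rightarrow> (nat\<Rightarrow>nat\<Rightarrow>complex) \<Rightarrow> bool" where
  "eqon A X Y \<longleftrightarrow> (\<forall>i\<in>A. \<forall>j\<in>A. X i j = Y i j)"

lemma mm_assoc: "mm A (mm A X Y) Z = mm A X (mm A Y Z)"
  unfolding mm_def
  by (auto intro!: ext simp: sum_distrib_left sum_distrib_right mult.assoc intro: sum.swap)

lemma mm_idm_left: "finite A \<Longrightarrow> i \<in> A \<Longrightarrow> mm A idm X i j = X i j"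
proof -
  assume "finite A" "i \<in> A"
  have "(\<lambda>k. (if i = k then 1 else 0) * X k j) = (\<lambda>k. if i = k then X k j else 0)" by auto
  hence "mm A idm X i j = (\<Sum>k\<in>A. if i = k then X k j else 0)" unfolding mm_def idm_def by (intro sum.cong) auto
  thus ?thesis using \<open>finite A\<close> \<open>i \<in> A\<close> by simp
qed

lemma mm_idm_right: "finite A \<Longrightarrow> j \<in> A \<Longrightarrow> mm A X idm i j = X i j"
proof -
  assume "finite A" "j \<in> A"
  have "(\<lambda>k. X i k * (if k = j then 1 else 0)) = (\<lambda>k. if k = j then X i k else 0)" by auto
  hence "mm A X idm i j = (\<Sum>k\<in>A. if k = j then X i k else 0)" unfolding mm_def idm_def by (intro sum.cong) auto
  thus ?thesis using \<open>finite A\<close> \<open>j \<in> A\<close> by simp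
qed

lemma adj_mm: "adj (mm A X Y) = mm A (adj Y) (adj X)"
  unfolding mm_def adj_def by (auto intro!: ext simp: mult.commute)

lemma adj_adj[simp]: "adj (adj X) = X"
  unfolding adj_def by simp

lemma adj_idm[simp]: "adj idm = idm"
  unfolding adj_def idm_def by (auto intro!: ext)

lemma mm_cong: "(\<And>k. k\<in>A \<Longrightarrow> X i k = X' i k) \<Longrightarrow> (\<And>k. k\<in>A \<Longrightarrow> Y k j = Y' k j) \<Longrightarrow> mm A X Y i j = mm A X' Y' i j"
  unfolding mm_def by (auto intro!: sum.cong)

lemma eqon_mm: "eqon A X X' \<Longrightarrow> eqon A Y Y' \<Longrightarrow> eqon A (mm A X Y) (mm A X' Y')"
  unfolding eqon_def by (auto intro!: mm_cong)

lemma eqon_refl[simp]: "eqon A X X" unfolding eqon_def by auto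
lemma eqon_sym: "eqon A X Y \<Longrightarrow> eqon A Y X" unfolding eqon_def by auto
lemma eqon_trans: "eqon A X Y \<Longrightarrow> eqon A Y Z \<Longrightarrow> eqon A X Z" unfolding eqon_def by auto
lemma eqon_adj: "eqon A X Y \<Longrightarrow> eqon A (adj X) (adj Y)" unfolding eqon_def adj_def by auto

lemma eqon_mm_idm_left: "finite A \<Longrightarrow> eqon A (mm A idm X) X"
  unfolding eqon_def by (simp add: mm_idm_left)
lemma eqon_mm_idm_right: "finite A \<Longrightarrow> eqon A (mm A X idm) X"
  unfolding eqon_def by (simp add: mm_idm_right)

lemma unitary_eqon: "unitary_on A U \<longleftrightarrow> eqon A (mm A (adj U) U) idm"
  unfolding unitary_on_def eqon_def mm_def adj_def idm_def by simp

lemma hermitian_eqon: "hermitian_on A L \<longleftrightarrow> eqon A (adj L) L"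
  unfolding hermitian_on_def eqon_def adj_def by (metis complex_cnj_cnj)

lemma mm_dg: "finite A \<Longrightarrow> k \<in> A \<Longrightarrow> mm A U (dg mu) i k = U i k * complex_of_real (mu k)"
proof -
  assume "finite A" "k \<in> A"
  have "(\<lambda>l. U i l * (if l = k then complex_of_real (mu l) else 0)) = (\<lambda>l. if l = k then U i k * complex_of_real (mu k) else 0)" by auto
  hence "mm A U (dg mu) i k = (\<Sum>l\<in>A. if l = k then U i k * complex_of_real (mu k) else 0)" unfolding mm_def dg_def by (intro sum.cong) auto
  thus ?thesis using \<open>finite A\<close> \<open>k \<in> A\<close> by simp
qed

lemma decomp_eqon: "finite A \<Longrightarrow> spectral_decomp_on A X U mu \<longleftrightarrow> unitary_on A U \<and> eqon A X (mm A (mm A U (dg mu)) (adj U))"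
  unfolding spectral_decomp_on_def eqon_def
  apply (subst (2) mm_def)
  apply (simp add: mm_dg adj_def)
  done

lemma conj_decomp:
  assumes fin: "finite A" and dec: "spectral_decomp_on A M W mu" and aH: "adj H = H"
    and HH: "eqon A (mm A H H) idm" and LM: "eqon A L (mm A (mm A H M) H)"
  shows "spectral_decomp_on A L (mm A H W) mu"
proof -
  from dec fin have uW: "eqon A (mm A (adj W) W) idm" and MW: "eqon A M (mm A (mm A W (dg mu)) (adj W))"
    by (auto simp: decomp_eqon unitary_eqon)
  have "eqon A (mm A (adj (mm A H W)) (mm A H W)) (mm A (adj W) (mm A (mm A H H) W))"
    by (simp add: adj_mm aH mm_assoc)
  moreover have "eqon A (mm A (adj W) (mm A (mm A H H) W)) (mm A (adj W) (mm A idm W))"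
    by (intro eqon_mm HH eqon_refl)
  moreover have "eqon A (mm A (adj W) (mm A idm W)) (mm A (adj W) W)"
    by (intro eqon_mm eqon_refl eqon_mm_idm_left fin)
  ultimately have u: "unitary_on A (mm A H W)" unfolding unitary_eqon
    using uW eqon_trans by blast
  have "eqon A (mm A (mm A H M) H) (mm A (mm A H (mm A (mm A W (dg mu)) (adj W))) H)"
    by (intro eqon_mm MW eqon_refl)
  moreover have "mm A (mm A H (mm A (mm A W (dg mu)) (adj W))) H = mm A (mm A (mm A H W) (dg mu)) (adj (mm A H W))"
    by (simp add: adj_mm aH mm_assoc)
  ultimately have "eqon A L (mm A (mm A (mm A H W) (dg mu)) (adj (mm A H W)))"
    using LM eqon_trans by metis
  with u fin show ?thesis by (simp add: decomp_eqon)
qed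

lemma eig_exists:
  fixes L :: "nat \<Rightarrow> nat \<Rightarrow> complex"
  assumes fin: "finite A" and ne: "A \<noteq> {}"
  shows "\<exists>w e. (\<exists>i\<in>A. w i \<noteq> 0) \<and> (\<forall>i\<in>A. (\<Sum>j\<in>A. L i j * w j) = e * w i)"
proof -
  define n where "n = card A"
  have n0: "n > 0" using fin ne unfolding n_def by (simp add: card_gt_0_iff)
  obtain f where bij: "bij_betw f {0..<n} A" using ex_bij_betw_nat_finite[OF fin] unfolding n_def by blast
  define M where "M = Matrix.mat n n (\<lambda>(i,j). L (f i) (f j))"
  have Mc: "M \<in> carrier_mat n n" unfolding M_def by simp

  from spectrum_non_empty[OF Mc n0] obtain e v where ev: "eigenvector M v e"
    unfolding spectrum_def eigenvalue_def by blast
  hence vc: "v \<in> carrier_vec n" and v0: "v \<noteq> 0\<^sub>v n" and Mv: "M *\<^sub>v v = e \<cdot>\<^sub>v v"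
    unfolding eigenvector_def using Mc by auto
  define g where "g = inv_into {0..<n} f"
  define w where "w j = v $ (g j)" for j
  have gf: "g (f t) = t" if "t < n" for t
    unfolding g_def using bij that by (simp add: bij_betw_def inv_into_f_f)
  have wf: "w (f t) = v $ t" if "t < n" for t unfolding w_def using gf that by simp
  have "\<forall>i\<in>A. (\<Sum>j\<in>A. L i j * w j) = e * w i"
  proof
    fix i assume i: "i \<in> A"
    obtain s where s: "s < n" "f s = i" using bij i unfolding bij_betw_def by auto
    have "(\<Sum>j\<in>A. L i j * w j) = (\<Sum>t\<in>{0..<n}. L i (f t) * w (f t))"
      using sum.reindex_bij_betw[OF bij, of "\<lambda>j. L i j * w j"] by simp
    also have "\<dots> = (\<Sum>t\<in>{0..<n}. M $$ (s,t) * v $ t)"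
      using s by (intro sum.cong) (auto simp: M_def wf)
    also have "\<dots> = (M *\<^sub>v v) $ s"
      using s Mc vc by (simp add: scalar_prod_def mult.commute)
    also have "\<dots> = e * v $ s" using Mv s vc by simp
    also have "\<dots> = e * w i" using s wf by metis
    finally show "(\<Sum>j\<in>A. L i j * w j) = e * w i" .
  qed
  moreover have "\<exists>i\<in>A. w i \<noteq> 0"
  proof (rule ccontr)
    assume "\<not> (\<exists>i\<in>A. w i \<noteq> 0)"
    hence "\<And>t. t < n \<Longrightarrow> v $ t = 0" using wf bij unfolding bij_betw_def by auto
    hence "v = 0\<^sub>v n" using vc by (intro eq_vecI) auto
    with v0 show False by simp
  qed
  ultimately show ?thesis by blast
qed

lemma cnj_mult_self: "cnj z * z = complex_of_real ((cmod z)^2)"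
  by (metis complex_norm_square mult.commute of_real_power)

lemma unit_eig:
  fixes L :: "nat \<Rightarrow> nat \<Rightarrow> complex"
  assumes fin: "finite A" and ne: "A \<noteq> {}" and herm: "hermitian_on A L"
  shows "\<exists>v (lam::real). (\<Sum>i\<in>A. cnj (v i) * v i) = 1 \<and> (\<forall>i\<in>A. (\<Sum>j\<in>A. L i j * v j) = complex_of_real lam * v i)"
proof -
  obtain w e where w0: "\<exists>i\<in>A. w i \<noteq> 0" and we: "\<forall>i\<in>A. (\<Sum>j\<in>A. L i j * w j) = e * w i"
    using eig_exists[OF fin ne, of L] by blast
  define \<sigma> where "\<sigma> = (\<Sum>i\<in>A. (cmod (w i))^2)"
  have sig_pos: "\<sigma> > 0"
  proof -
    from w0 obtain i where i: "i \<in> A" "w i \<noteq> 0" by blast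
    have "(cmod (w i))^2 \<le> \<sigma>" unfolding \<sigma>_def using i fin
      by (intro member_le_sum) auto
    moreover have "(cmod (w i))^2 > 0" using i by simp
    ultimately show ?thesis by linarith
  qed
  have s_eq: "(\<Sum>i\<in>A. cnj (w i) * w i) = complex_of_real \<sigma>"
    unfolding \<sigma>_def by (simp add: cnj_mult_self)
  define q where "q = (\<Sum>i\<in>A. cnj (w i) * (\<Sum>j\<in>A. L i j * w j))"
  have "q = (\<Sum>i\<in>A. cnj (w i) * (e * w i))"
    unfolding q_def using we by (intro sum.cong) auto
  also have "\<dots> = e * (\<Sum>i\<in>A. cnj (w i) * w i)"
    by (simp add: sum_distrib_left mult_ac)
  finally have q1: "q = e * complex_of_real \<sigma>" using s_eq by simp
  have "cnj q = (\<Sum>i\<in>A. \<Sum>j\<in>A. w i * cnj (L i j) * cnj (w j))"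
    unfolding q_def by (simp add: sum_distrib_left mult_ac)
  also have "\<dots> = (\<Sum>i\<in>A. \<Sum>j\<in>A. w i * L j i * cnj (w j))"
    using herm unfolding hermitian_on_def by (intro sum.cong refl) (metis complex_cnj_cnj)
  also have "\<dots> = (\<Sum>j\<in>A. \<Sum>i\<in>A. w i * L j i * cnj (w j))" by (rule sum.swap)
  also have "\<dots> = q" unfolding q_def by (simp add: sum_distrib_left mult_ac)
  finally have "cnj q = q" .
  hence "Im q = 0" by (metis cnj.simps(2) complex_cnj_cancel_iff equal_neg_zero Im_complex_of_real complex_eq_iff)
  hence "Im e * \<sigma> = 0" using q1 by simp
  hence eim: "Im e = 0" using sig_pos by simp
  define lam where "lam = Re e"
  have elam: "e = complex_of_real lam" unfolding lam_def using eim by (simp add: complex_eq_iff)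
  define v where "v i = w i / complex_of_real (sqrt \<sigma>)" for i
  have "(\<Sum>i\<in>A. cnj (v i) * v i) = (\<Sum>i\<in>A. cnj (w i) * w i) / complex_of_real \<sigma>"
    unfolding v_def sum_divide_distrib using sig_pos
    by (intro sum.cong refl) (simp add: field_simps flip: of_real_mult)
  also have "\<dots> = 1" using s_eq sig_pos by simp
  finally have v1: "(\<Sum>i\<in>A. cnj (v i) * v i) = 1" .
  have "\<forall>i\<in>A. (\<Sum>j\<in>A. L i j * v j) = complex_of_real lam * v i"
  proof
    fix i assume i: "i \<in> A"
    have "(\<Sum>j\<in>A. L i j * v j) = (\<Sum>j\<in>A. L i j * w j) / complex_of_real (sqrt \<sigma>)"
      unfolding v_def sum_divide_distrib by (simp add: mult_ac)
    also have "\<dots> = complex_of_real lam * v i" using we i elam unfolding v_def by simp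
    finally show "(\<Sum>j\<in>A. L i j * v j) = complex_of_real lam * v i" .
  qed
  with v1 show ?thesis by blast
qed

lemma sum_idm_left: "finite A \<Longrightarrow> a \<in> A \<Longrightarrow> (\<Sum>k\<in>A. idm k a * f k) = f a"
proof -
  assume "finite A" "a \<in> A"
  have "(\<Sum>k\<in>A. idm k a * f k) = (\<Sum>k\<in>A. if k = a then f k else 0)"
    unfolding idm_def by (intro sum.cong) auto
  thus ?thesis using \<open>finite A\<close> \<open>a \<in> A\<close> by simp
qed

lemma householder:
  fixes v :: "nat \<Rightarrow> complex"
  assumes fin: "finite A" and a: "a \<in> A" and unit: "(\<Sum>i\<in>A. cnj (v i) * v i) = 1"
  shows "\<exists>H c. adj H = H \<and> eqon A (mm A H H) idm \<and> (\<forall>i\<in>A. H i a = c * v i) \<and> cnj c * c = 1"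
proof -
  define c where "c = (if v a = 0 then -1 else - cnj (v a) / complex_of_real (cmod (v a)))"
  have ya: "c * v a = - complex_of_real (cmod (v a))"
  proof (cases "v a = 0")
    case True thus ?thesis unfolding c_def by simp
  next
    case False
    hence "cnj (v a) * v a / complex_of_real (cmod (v a)) = complex_of_real (cmod (v a))"
      by (simp add: cnj_mult_self power2_eq_square)
    thus ?thesis unfolding c_def using False by (simp add: field_simps)
  qed
  have cc: "cnj c * c = 1"
  proof (cases "v a = 0")
    case True thus ?thesis unfolding c_def by simp
  next
    case False
    hence "cmod c = 1" unfolding c_def by (simp add: norm_divide)
    thus ?thesis by (simp add: cnj_mult_self)
  qed
  define y where "y i = c * v i" for i
  define w where "w i = idm i a - y i" for i
  define s where "s = 2 + 2 * cmod (v a)"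
  have s_pos: "s > 0" unfolding s_def by (simp add: add_pos_nonneg)
  define t where "t = 2 / complex_of_real s"
  define H where "H i j = idm i j - t * w i * cnj (w j)" for i j
  have idm_cnj: "cnj (idm i j) = idm i j" for i j unfolding idm_def by simp
  have idm_sym: "idm i j = idm j i" for i j unfolding idm_def by simp
  have tr: "cnj t = t" unfolding t_def by simp
  have aH: "adj H = H"
    unfolding adj_def H_def by (intro ext) (simp add: idm_cnj tr idm_def mult_ac)
  have yy: "(\<Sum>k\<in>A. cnj (y k) * y k) = 1"
  proof -
    have "(\<Sum>k\<in>A. cnj (y k) * y k) = (cnj c * c) * (\<Sum>k\<in>A. cnj (v k) * v k)"
      unfolding y_def sum_distrib_left by (intro sum.cong) (auto simp: mult_ac)
    thus ?thesis using cc unit by simp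
  qed
  have ya': "cnj (y a) = y a" unfolding y_def ya by simp
  have ww: "(\<Sum>k\<in>A. cnj (w k) * w k) = complex_of_real s"
  proof -
    have "(\<Sum>k\<in>A. cnj (w k) * w k) = (\<Sum>k\<in>A. idm k a * idm a a) - (\<Sum>k\<in>A. idm k a * y k)
        - (\<Sum>k\<in>A. idm k a * cnj (y k)) + (\<Sum>k\<in>A. cnj (y k) * y k)"
    proof -
      have "cnj (w k) * w k = idm k a * idm a a - idm k a * y k - idm k a * cnj (y k) + cnj (y k) * y k" for k
        unfolding w_def idm_def by (cases "k = a") (auto simp: algebra_simps)
      hence "(\<Sum>k\<in>A. cnj (w k) * w k) = (\<Sum>k\<in>A. idm k a * idm a a - idm k a * y k - idm k a * cnj (y k) + cnj (y k) * y k)"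
        by simp
      thus ?thesis by (simp only: sum.distrib sum_subtractf)
    qed
    also have "\<dots> = 1 - y a - y a + 1" using fin a yy ya' by (simp add: sum_idm_left) (simp add: idm_def)
    also have "\<dots> = complex_of_real s" unfolding s_def y_def ya by simp
    finally show ?thesis .
  qed
  have HH: "eqon A (mm A H H) idm"
    unfolding eqon_def
  proof (intro ballI)
    fix i j assume i: "i \<in> A" and j: "j \<in> A"
    have "mm A H H i j = (\<Sum>k\<in>A. idm k i * idm k j) - t * w i * (\<Sum>k\<in>A. idm k j * cnj (w k))
       - t * cnj (w j) * (\<Sum>k\<in>A. idm k i * w k) + t * t * w i * cnj (w j) * (\<Sum>k\<in>A. cnj (w k) * w k)"
    proof -
      have "H i k * H k j = idm k i * idm k j - t * w i * (idm k j * cnj (w k))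
       - t * cnj (w j) * (idm k i * w k) + t * t * w i * cnj (w j) * (cnj (w k) * w k)" for k
        unfolding H_def idm_def by (cases "k = i"; cases "k = j") (auto simp: algebra_simps)
      hence "mm A H H i j = (\<Sum>k\<in>A. idm k i * idm k j - t * w i * (idm k j * cnj (w k))
       - t * cnj (w j) * (idm k i * w k) + t * t * w i * cnj (w j) * (cnj (w k) * w k))"
        unfolding mm_def by simp
      thus ?thesis by (simp only: sum.distrib sum_subtractf flip: sum_distrib_left)
    qed
    also have "\<dots> = idm i j - 2 * t * w i * cnj (w j) + t * t * w i * cnj (w j) * complex_of_real s"
      using fin i j ww by (simp only: sum_idm_left idm_sym[of j i]) (simp add: algebra_simps)
    also have "t * t * complex_of_real s = 2 * t" unfolding t_def using s_pos by (simp add: field_simps)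
    hence "t * t * w i * cnj (w j) * complex_of_real s = 2 * t * w i * cnj (w j)"
      by (metis mult.commute mult.left_commute)
    finally show "mm A H H i j = idm i j" by simp
  qed
  have wa: "cnj (w a) = complex_of_real s / 2"
    unfolding w_def idm_def s_def by (simp add: ya y_def)
  have Ha: "\<forall>i\<in>A. H i a = c * v i"
  proof
    fix i assume "i \<in> A"
    have "t * (complex_of_real s / 2) = 1" unfolding t_def using s_pos by simp
    hence "H i a = idm i a - w i" unfolding H_def wa by (metis mult.commute mult.left_commute mult_1)
    thus "H i a = c * v i" unfolding w_def y_def by simp
  qed
  show ?thesis using aH HH Ha cc by blast
qed

lemma spectral_exists:
  fixes L :: "nat \<Rightarrow> nat \<Rightarrow> complex"
  assumes "finite A" and "hermitian_on A L"
  shows "\<exists>U mu. spectral_decomp_on A L U mu"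
  using assms
proof (induction A arbitrary: L rule: finite_induct)
  case empty
  show ?case by (auto simp: spectral_decomp_on_def unitary_on_def)
next
  case (insert a B)
  define A' where "A' = insert a B"
  have fin: "finite A'" unfolding A'_def using insert by simp
  have aA: "a \<in> A'" unfolding A'_def by simp
  have herm: "hermitian_on A' L" using insert unfolding A'_def by simp
  obtain v lam where v1: "(\<Sum>i\<in>A'. cnj (v i) * v i) = 1"
    and ev: "\<forall>i\<in>A'. (\<Sum>j\<in>A'. L i j * v j) = complex_of_real lam * v i"
    using unit_eig[OF fin _ herm] aA by blast
  obtain H c where aH: "adj H = H" and HH: "eqon A' (mm A' H H) idm" and Ha: "\<forall>i\<in>A'. H i a = c * v i"
    using householder[OF fin aA v1] by blast
  define M where "M = mm A' (mm A' H L) H"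
  have LH: "mm A' L H k a = complex_of_real lam * H k a" if k: "k \<in> A'" for k
  proof -
    have "mm A' L H k a = (\<Sum>l\<in>A'. L k l * (c * v l))" unfolding mm_def using Ha by (intro sum.cong) auto
    also have "\<dots> = c * (\<Sum>l\<in>A'. L k l * v l)" by (simp add: sum_distrib_left mult_ac)
    also have "\<dots> = complex_of_real lam * H k a" using ev k Ha by simp
    finally show ?thesis .
  qed
  have Ma: "M i a = (if i = a then complex_of_real lam else 0)" if i: "i \<in> A'" for i
  proof -
    have "M i a = mm A' H (mm A' L H) i a" unfolding M_def by (simp add: mm_assoc)
    also have "\<dots> = (\<Sum>k\<in>A'. H i k * (complex_of_real lam * H k a))"
      unfolding mm_def[of A' H] using LH by (intro sum.cong) auto
    also have "\<dots> = complex_of_real lam * mm A' H H i a" unfolding mm_def by (simp add: sum_distrib_left mult_ac)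
    also have "\<dots> = complex_of_real lam * idm i a" using HH i aA unfolding eqon_def by simp
    finally show ?thesis unfolding idm_def by simp
  qed
  have Mherm: "eqon A' (adj M) M"
  proof -
    have "adj M = mm A' (mm A' H (adj L)) H" unfolding M_def by (simp add: adj_mm aH mm_assoc)
    moreover have "eqon A' (mm A' (mm A' H (adj L)) H) M" unfolding M_def
      using herm unfolding hermitian_eqon by (intro eqon_mm eqon_refl)
    ultimately show ?thesis by simp
  qed
  have Ma': "M a j = (if j = a then complex_of_real lam else 0)" if j: "j \<in> A'" for j
  proof -
    have "M a j = cnj (M j a)" using Mherm j aA unfolding eqon_def adj_def by metis
    thus ?thesis using Ma[OF j] by simp
  qed
  have hB: "hermitian_on B M" using Mherm unfolding hermitian_eqon eqon_def adj_def A'_def by auto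
  obtain U' mu' where dB: "spectral_decomp_on B M U' mu'" using insert.IH[OF hB] by blast
  define U2 where "U2 i k = (if k = a then idm i a else if i = a then 0 else U' i k)" for i k
  define mu2 where "mu2 = mu'(a := lam)"
  have "spectral_decomp_on A' M U2 mu2"
  proof -
    have uB: "\<forall>i\<in>B. \<forall>j\<in>B. (\<Sum>k\<in>B. cnj (U' k i) * U' k j) = (if i = j then 1 else 0)"
      using dB unfolding spectral_decomp_on_def unitary_on_def by blast
    have dMB: "\<forall>i\<in>B. \<forall>j\<in>B. M i j = (\<Sum>k\<in>B. U' i k * complex_of_real (mu' k) * cnj (U' j k))"
      using dB unfolding spectral_decomp_on_def by blast
    have s1: "(\<Sum>k\<in>B. cnj (U2 k i) * U2 k j) = (if i = a \<or> j = a then 0 else (\<Sum>k\<in>B. cnj (U' k i) * U' k j))" for i j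
      unfolding U2_def using insert.hyps(2) by (auto intro!: sum.cong sum.neutral simp: idm_def)
    have s2: "(\<Sum>k\<in>B. U2 i k * complex_of_real (mu2 k) * cnj (U2 j k)) = (if i = a \<or> j = a then 0 else (\<Sum>k\<in>B. U' i k * complex_of_real (mu' k) * cnj (U' j k)))" for i j
      unfolding U2_def mu2_def using insert.hyps(2) by (auto intro!: sum.cong sum.neutral simp: idm_def)
    show ?thesis unfolding spectral_decomp_on_def unitary_on_def A'_def
      using insert.hyps s1 s2 uB dMB Ma Ma' aA unfolding A'_def
      by (auto simp: U2_def mu2_def idm_def)
  qed
  moreover have "eqon A' L (mm A' (mm A' H M) H)"
  proof -
    have "mm A' (mm A' H M) H = mm A' (mm A' H H) (mm A' L (mm A' H H))" unfolding M_def by (simp add: mm_assoc)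
    moreover have "eqon A' (mm A' (mm A' H H) (mm A' L (mm A' H H))) (mm A' idm (mm A' L idm))"
      by (intro eqon_mm HH eqon_refl)
    moreover have "eqon A' (mm A' idm (mm A' L idm)) (mm A' L idm)" by (rule eqon_mm_idm_left[OF fin])
    moreover have "eqon A' (mm A' L idm) L" by (rule eqon_mm_idm_right[OF fin])
    ultimately show ?thesis by (metis eqon_sym eqon_trans)
  qed
  ultimately have "spectral_decomp_on A' L (mm A' H U2) mu2" using conj_decomp[OF fin _ aH HH] by blast
  thus ?case unfolding A'_def by blast
qed

lemma tr_conj:
  assumes fin: "finite A" and u: "unitary_on A U"
  shows "(\<Sum>i\<in>A. mm A (mm A U (dg f)) (adj U) i i) = (\<Sum>k\<in>A. complex_of_real (f k))"
proof -
  have "(\<Sum>i\<in>A. mm A (mm A U (dg f)) (adj U) i i) = (\<Sum>i\<in>A. \<Sum>k\<in>A. U i k * complex_of_real (f k) * cnj (U i k))"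
    unfolding mm_def[of A "mm A U (dg f)"] using fin by (simp add: mm_dg adj_def)
  also have "\<dots> = (\<Sum>k\<in>A. \<Sum>i\<in>A. U i k * complex_of_real (f k) * cnj (U i k))" by (rule sum.swap)
  also have "\<dots> = (\<Sum>k\<in>A. complex_of_real (f k) * (\<Sum>i\<in>A. cnj (U i k) * U i k))"
    by (simp add: sum_distrib_left mult_ac)
  also have "\<dots> = (\<Sum>k\<in>A. complex_of_real (f k))"
    using u unfolding unitary_on_def by (intro sum.cong) auto
  finally show ?thesis .
qed

lemma trace_X:
  assumes fin: "finite A" and d: "spectral_decomp_on A X U mu"
  shows "(\<Sum>i\<in>A. X i i) = (\<Sum>k\<in>A. complex_of_real (mu k))"
proof -
  from d fin have u: "unitary_on A U" and e: "eqon A X (mm A (mm A U (dg mu)) (adj U))"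
    by (auto simp: decomp_eqon)
  have "(\<Sum>i\<in>A. X i i) = (\<Sum>i\<in>A. mm A (mm A U (dg mu)) (adj U) i i)"
    using e unfolding eqon_def by (intro sum.cong) auto
  thus ?thesis using tr_conj[OF fin u] by simp
qed

lemma sq_X:
  assumes fin: "finite A" and d: "spectral_decomp_on A X U mu"
  shows "(\<Sum>i\<in>A. \<Sum>j\<in>A. X i j * X j i) = (\<Sum>k\<in>A. complex_of_real ((mu k)^2))"
proof -
  from d fin have u: "eqon A (mm A (adj U) U) idm" and uu: "unitary_on A U" and e: "eqon A X (mm A (mm A U (dg mu)) (adj U))"
    by (auto simp: decomp_eqon unitary_eqon)
  have dd: "eqon A (mm A (dg mu) (dg mu)) (dg (\<lambda>k. (mu k)^2))"
    unfolding eqon_def using fin by (auto simp: mm_dg) (auto simp: dg_def power2_eq_square)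
  have "eqon A (mm A X X) (mm A (mm A (mm A U (dg mu)) (adj U)) (mm A (mm A U (dg mu)) (adj U)))"
    using e by (intro eqon_mm)
  moreover have "mm A (mm A (mm A U (dg mu)) (adj U)) (mm A (mm A U (dg mu)) (adj U))
     = mm A U (mm A (dg mu) (mm A (mm A (adj U) U) (mm A (dg mu) (adj U))))" by (simp add: mm_assoc)
  moreover have "eqon A (mm A U (mm A (dg mu) (mm A (mm A (adj U) U) (mm A (dg mu) (adj U)))))
      (mm A U (mm A (dg mu) (mm A idm (mm A (dg mu) (adj U)))))"
    using u by (intro eqon_mm eqon_refl)
  moreover have "eqon A (mm A idm (mm A (dg mu) (adj U))) (mm A (dg mu) (adj U))"
    by (rule eqon_mm_idm_left[OF fin])
  moreover have "mm A U (mm A (dg mu) (mm A (dg mu) (adj U))) = mm A (mm A U (mm A (dg mu) (dg mu))) (adj U)"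
    by (simp add: mm_assoc)
  moreover have "eqon A (mm A (mm A U (mm A (dg mu) (dg mu))) (adj U)) (mm A (mm A U (dg (\<lambda>k. (mu k)^2))) (adj U))"
    using dd by (intro eqon_mm eqon_refl)
  ultimately have E: "eqon A (mm A X X) (mm A (mm A U (dg (\<lambda>k. (mu k)^2))) (adj U))"
    by (smt (verit, best) eqon_mm eqon_refl eqon_trans)
  have "(\<Sum>i\<in>A. \<Sum>j\<in>A. X i j * X j i) = (\<Sum>i\<in>A. mm A X X i i)" unfolding mm_def by simp
  also have "\<dots> = (\<Sum>i\<in>A. mm A (mm A U (dg (\<lambda>k. (mu k)^2))) (adj U) i i)"
    using E unfolding eqon_def by (intro sum.cong) auto
  also have "\<dots> = (\<Sum>k\<in>A. complex_of_real ((mu k)^2))" by (rule tr_conj[OF fin uu])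
  finally show ?thesis .
qed

lemma rayleigh:
  assumes fin: "finite A" and d: "spectral_decomp_on A X U mu" and k: "k \<in> A"
  shows "(\<Sum>j\<in>A. (\<Sum>i\<in>A. cnj (U i k) * X i j) * U j k) = complex_of_real (mu k)"
proof -
  from d fin have u: "eqon A (mm A (adj U) U) idm" and e: "eqon A X (mm A (mm A U (dg mu)) (adj U))"
    by (auto simp: decomp_eqon unitary_eqon)
  have "eqon A (mm A (mm A (adj U) X) U) (mm A (mm A (adj U) (mm A (mm A U (dg mu)) (adj U))) U)"
    using e by (intro eqon_mm eqon_refl)
  moreover have "mm A (mm A (adj U) (mm A (mm A U (dg mu)) (adj U))) U = mm A (mm A (mm A (adj U) U) (dg mu)) (mm A (adj U) U)"
    by (simp add: mm_assoc)
  moreover have "eqon A (mm A (mm A (mm A (adj U) U) (dg mu)) (mm A (adj U) U)) (mm A (mm A idm (dg mu)) idm)"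
    using u by (intro eqon_mm eqon_refl)
  moreover have "eqon A (mm A (mm A idm (dg mu)) idm) (dg mu)"
    using eqon_mm_idm_left[OF fin] eqon_mm_idm_right[OF fin] by (metis eqon_trans)
  ultimately have "eqon A (mm A (mm A (adj U) X) U) (dg mu)" by (metis eqon_trans)
  hence "mm A (mm A (adj U) X) U k k = dg mu k k" using k unfolding eqon_def by blast
  thus ?thesis unfolding mm_def adj_def dg_def by simp
qed

lemma cauchy_affine:
  fixes phi :: "real \<Rightarrow> real"
  assumes cont: "continuous_on {0..} phi"
    and add: "\<And>x y. x \<ge> 0 \<Longrightarrow> y \<ge> 0 \<Longrightarrow> phi x + phi y = phi (x + y) + phi 0"
  shows "\<exists>b c. \<forall>x\<ge>0. phi x = b * x + c"
proof -
  define g where "g x = phi x - phi 0" for x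
  have gadd: "g (x + y) = g x + g y" if "x \<ge> 0" "y \<ge> 0" for x y
    using add[OF that] unfolding g_def by simp
  have gn: "g (real n * x) = real n * g x" if "x \<ge> 0" for n x
  proof (induction n)
    case 0 show ?case unfolding g_def by simp
  next
    case (Suc n)
    have "g (real (Suc n) * x) = g (real n * x + x)" by (simp add: algebra_simps)
    also have "\<dots> = g (real n * x) + g x" using that by (intro gadd) auto
    finally show ?case using Suc by (simp add: algebra_simps)
  qed
  have grat: "g (real m / real n) = real m / real n * g 1" if n: "n > 0" for m n
  proof -
    have "g 1 = g (real n * (1 / real n))" using n by simp
    also have "\<dots> = real n * g (1 / real n)" by (rule gn) simp
    finally have g1: "g (1 / real n) = g 1 / real n" using n by (simp add: field_simps)
    have "g (real m / real n) = g (real m * (1 / real n))" by simp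
    also have "\<dots> = real m * g (1 / real n)" by (rule gn) simp
    finally show ?thesis using g1 by simp
  qed
  have "\<forall>x\<ge>0. phi x = g 1 * x + phi 0"
  proof (intro allI impI)
    fix x :: real assume x: "x \<ge> 0"
    define r where "r k = real (nat \<lfloor>real (Suc k) * x\<rfloor>) / real (Suc k)" for k
    have fl: "real (nat \<lfloor>real (Suc k) * x\<rfloor>) = of_int \<lfloor>real (Suc k) * x\<rfloor>" for k
      using x by simp
    have up: "r k \<le> x" for k
    proof -
      have "of_int \<lfloor>real (Suc k) * x\<rfloor> \<le> real (Suc k) * x" by (rule of_int_floor_le)
      thus ?thesis unfolding r_def fl by (simp add: divide_le_eq mult.commute)
    qed
    have lo: "x - inverse (real (Suc k)) \<le> r k" for k
    proof -
      have "real (Suc k) * x < of_int \<lfloor>real (Suc k) * x\<rfloor> + 1" by (rule real_of_int_floor_add_one_gt)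
      hence "real (Suc k) * x - 1 \<le> of_int \<lfloor>real (Suc k) * x\<rfloor>" by linarith
      hence "(real (Suc k) * x - 1) / real (Suc k) \<le> r k" unfolding r_def fl
        by (intro divide_right_mono) auto
      moreover have "(real (Suc k) * x - 1) / real (Suc k) = x - inverse (real (Suc k))"
        by (simp add: field_simps)
      ultimately show ?thesis by simp
    qed
    have r0: "r k \<ge> 0" for k unfolding r_def by simp
    have lim_lo: "(\<lambda>k. x - inverse (real (Suc k))) \<longlonglongrightarrow> x"
      using tendsto_diff[OF tendsto_const LIMSEQ_inverse_real_of_nat, of x] by simp
    have rlim: "r \<longlonglongrightarrow> x"
      by (rule tendsto_sandwich[OF _ _ lim_lo tendsto_const]) (use lo up in \<open>auto intro: always_eventually\<close>)
    have l1: "(\<lambda>k. phi (r k)) \<longlonglongrightarrow> phi x"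
      using continuous_on_tendsto_compose[OF cont rlim] x r0 by (simp add: o_def)
    have "phi (r k) = g 1 * r k + phi 0" for k
    proof -
      have "g (r k) = r k * g 1" unfolding r_def by (rule grat) simp
      thus ?thesis unfolding g_def by (simp add: mult.commute)
    qed
    hence l2: "(\<lambda>k. phi (r k)) \<longlonglongrightarrow> g 1 * x + phi 0"
      using tendsto_add[OF tendsto_mult[OF tendsto_const rlim] tendsto_const, of "g 1" "phi 0"] by simp
    show "phi x = g 1 * x + phi 0" using LIMSEQ_unique[OF l1 l2] .
  qed
  thus ?thesis by blast
qed

lemma tr_fun_decomp:
  fixes X :: "nat \<Rightarrow> nat \<Rightarrow> complex"
  assumes fin: "finite A" and herm: "hermitian_on A X"
  shows "\<exists>U mu. spectral_decomp_on A X U mu \<and> tr_fun phi X A = (\<Sum>k\<in>A. phi (mu k))"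
proof -
  define P where "P F \<longleftrightarrow> (\<exists>U mu. spectral_decomp_on A X U mu \<and>
     (\<forall>i\<in>A. \<forall>j\<in>A. F i j = (\<Sum>k\<in>A. U i k * complex_of_real (phi (mu k)) * cnj (U j k))))" for F
  obtain U0 mu0 where "spectral_decomp_on A X U0 mu0" using spectral_exists[OF fin herm] by blast
  hence "P (\<lambda>i j. \<Sum>k\<in>A. U0 i k * complex_of_real (phi (mu0 k)) * cnj (U0 j k))" unfolding P_def by blast
  hence "P (mat_fun_on phi A X)" unfolding mat_fun_on_def P_def[symmetric] by (rule someI[where P=P])
  then obtain U mu where d: "spectral_decomp_on A X U mu"
    and F: "\<forall>i\<in>A. \<forall>j\<in>A. mat_fun_on phi A X i j = (\<Sum>k\<in>A. U i k * complex_of_real (phi (mu k)) * cnj (U j k))"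
    unfolding P_def by blast
  have u: "unitary_on A U" using d unfolding spectral_decomp_on_def by blast
  have "(\<Sum>i\<in>A. mat_fun_on phi A X i i) = (\<Sum>i\<in>A. mm A (mm A U (dg (\<lambda>k. phi (mu k)))) (adj U) i i)"
    using F fin by (intro sum.cong refl) (simp add: mm_def[of A "mm A U _"] mm_dg adj_def)
  also have "\<dots> = (\<Sum>k\<in>A. complex_of_real (phi (mu k)))" by (rule tr_conj[OF fin u])
  finally have "tr_fun phi X A = (\<Sum>k\<in>A. phi (mu k))" unfolding tr_fun_def by simp
  with d show ?thesis by blast
qed

lemma psd_eig_nonneg:
  assumes N: "A \<subseteq> {1..N}" and psd: "psd_hermitian_on {1..N} L"
    and d: "spectral_decomp_on A L U mu" and k: "k \<in> A"
  shows "mu k \<ge> 0"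
proof -
  have fin: "finite A" using N finite_subset by blast
  define x where "x i = (if i \<in> A then U i k else 0)" for i
  have "0 \<le> Re (\<Sum>i\<in>{1..N}. \<Sum>j\<in>{1..N}. cnj (x i) * L i j * x j)"
    using psd unfolding psd_hermitian_on_def by blast
  also have "(\<Sum>i\<in>{1..N}. \<Sum>j\<in>{1..N}. cnj (x i) * L i j * x j) = (\<Sum>i\<in>A. \<Sum>j\<in>A. cnj (x i) * L i j * x j)"
  proof -
    have "(\<Sum>i\<in>{1..N}. \<Sum>j\<in>{1..N}. cnj (x i) * L i j * x j) = (\<Sum>i\<in>A. \<Sum>j\<in>{1..N}. cnj (x i) * L i j * x j)"
      using N by (intro sum.mono_neutral_right) (auto simp: x_def[of i for i] intro!: sum.neutral)
    also have "\<dots> = (\<Sum>i\<in>A. \<Sum>j\<in>A. cnj (x i) * L i j * x j)"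
      using N by (intro sum.cong refl sum.mono_neutral_right) (auto simp: x_def[of j for j])
    finally show ?thesis .
  qed
  also have "\<dots> = (\<Sum>j\<in>A. (\<Sum>i\<in>A. cnj (U i k) * L i j) * U j k)"
  proof -
    have "(\<Sum>i\<in>A. \<Sum>j\<in>A. cnj (x i) * L i j * x j) = (\<Sum>i\<in>A. \<Sum>j\<in>A. cnj (U i k) * L i j * U j k)"
      by (intro sum.cong refl) (simp add: x_def)
    also have "\<dots> = (\<Sum>j\<in>A. \<Sum>i\<in>A. cnj (U i k) * L i j * U j k)" by (rule sum.swap)
    also have "\<dots> = (\<Sum>j\<in>A. (\<Sum>i\<in>A. cnj (U i k) * L i j) * U j k)" by (simp add: sum_distrib_right)
    finally show ?thesis .
  qed
  also have "\<dots> = complex_of_real (mu k)" by (rule rayleigh[OF fin d k])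
  finally show ?thesis by simp
qed

lemma Z_pos: "Z_phi phi N L > 0"
  unfolding Z_phi_def by (intro sum_pos) auto

lemma ln_dkpp: "ln (dkpp phi N L S) = tr_fun phi L S - ln (Z_phi phi N L)"
  unfolding dkpp_def using Z_pos[of phi N L] by (simp add: ln_div)

lemma dkpp_pos: "dkpp phi N L S > 0"
  unfolding dkpp_def using Z_pos[of phi N L] by simp

lemma affine_tr:
  assumes aff: "\<forall>x\<ge>0. phi x = b * x + c" and psd: "psd_hermitian_on {1..N} L" and S: "S \<subseteq> {1..N}"
  shows "tr_fun phi L S = b * (\<Sum>i\<in>S. Re (L i i)) + c * real (card S)"
proof -
  have fin: "finite S" using S finite_subset by blast
  have herm: "hermitian_on S L" using psd S unfolding psd_hermitian_on_def hermitian_on_def by blast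
  obtain U mu where d: "spectral_decomp_on S L U mu" and t: "tr_fun phi L S = (\<Sum>k\<in>S. phi (mu k))"
    using tr_fun_decomp[OF fin herm] by blast
  have "(\<Sum>k\<in>S. phi (mu k)) = (\<Sum>k\<in>S. b * mu k + c)"
    using aff psd_eig_nonneg[OF S psd d] by (intro sum.cong) auto
  also have "\<dots> = b * (\<Sum>k\<in>S. mu k) + c * real (card S)" by (simp add: sum.distrib sum_distrib_left)
  also have "(\<Sum>k\<in>S. mu k) = (\<Sum>i\<in>S. Re (L i i))"
    using arg_cong[OF trace_X[OF fin d], of Re] by simp
  finally show ?thesis using t by simp
qed

lemma forward:
  assumes aff: "\<forall>x\<ge>0. phi x = b * x + c" and psd: "psd_hermitian_on {1..N} L"
  shows "log_modular_on {1..N} (dkpp phi N L)"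
  unfolding log_modular_on_def modular_on_def
proof (intro conjI allI impI)
  fix S assume "S \<subseteq> {1..N}" show "dkpp phi N L S > 0" by (rule dkpp_pos)
next
  fix S T assume S: "S \<subseteq> {1..N}" and T: "T \<subseteq> {1..N}"
  have fS: "finite S" and fT: "finite T" using S T finite_subset by auto
  have u: "S \<union> T \<subseteq> {1..N}" and i: "S \<inter> T \<subseteq> {1..N}" using S T by auto
  have s1: "(\<Sum>i\<in>S. Re (L i i)) + (\<Sum>i\<in>T. Re (L i i)) = (\<Sum>i\<in>S \<union> T. Re (L i i)) + (\<Sum>i\<in>S \<inter> T. Re (L i i))"
    using sum.union_inter[OF fS fT, of "\<lambda>i. Re (L i i)"] by simp
  have s2: "real (card S) + real (card T) = real (card (S \<union> T)) + real (card (S \<inter> T))"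
    using card_Un_Int[OF fS fT] by simp
  show "ln (dkpp phi N L S) + ln (dkpp phi N L T) = ln (dkpp phi N L (S \<union> T)) + ln (dkpp phi N L (S \<inter> T))"
    unfolding ln_dkpp affine_tr[OF aff psd S] affine_tr[OF aff psd T] affine_tr[OF aff psd u] affine_tr[OF aff psd i]
    using arg_cong[OF s1, of "\<lambda>z. b * z"] arg_cong[OF s2, of "\<lambda>z. c * z"]
    unfolding distrib_left by linarith
qed

lemma rank1_psd:
  fixes rv :: "nat \<Rightarrow> real"
  shows "psd_hermitian_on B (\<lambda>i j. complex_of_real (rv i * rv j))"
  unfolding psd_hermitian_on_def hermitian_on_def
proof (intro conjI allI ballI)
  fix i j show "complex_of_real (rv i * rv j) = cnj (complex_of_real (rv j * rv i))" by (simp add: mult.commute)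
next
  fix z :: "nat \<Rightarrow> complex"
  define s where "s = (\<Sum>j\<in>B. complex_of_real (rv j) * z j)"
  have "cnj s * s = (\<Sum>i\<in>B. \<Sum>j\<in>B. cnj (z i) * complex_of_real (rv i * rv j) * z j)"
    unfolding s_def cnj_sum sum_product by (intro sum.cong refl) (simp add: mult_ac)
  moreover have "Re (cnj s * s) \<ge> 0" by (simp add: cnj_mult_self)
  ultimately show "0 \<le> Re (\<Sum>i\<in>B. \<Sum>j\<in>B. cnj (z i) * complex_of_real (rv i * rv j) * z j)" by simp
qed

lemma backward_eq:
  fixes phi :: "real \<Rightarrow> real"
  assumes N: "N \<ge> 2" and H: "\<forall>L. psd_hermitian_on {1..N} L \<longrightarrow> log_modular_on {1..N} (dkpp phi N L)"
    and x: "x \<ge> 0" and y: "y \<ge> 0"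
  shows "phi x + phi y = phi (x + y) + phi 0"
proof -
  define rv :: "nat \<Rightarrow> real" where "rv i = (if i = 1 then sqrt x else if i = 2 then sqrt y else 0)" for i
  define L where "L i j = complex_of_real (rv i * rv j)" for i j
  have psd: "psd_hermitian_on {1..N} L" unfolding L_def by (rule rank1_psd)
  have hL: "hermitian_on A L" for A unfolding L_def hermitian_on_def by (simp add: mult.commute)
  have r1: "rv 1 * rv 1 = x" unfolding rv_def using x by simp
  have r2: "rv 2 * rv 2 = y" unfolding rv_def using y by simp
  have t1: "tr_fun phi L {1} = phi x"
  proof -
    obtain U mu where d: "spectral_decomp_on {1} L U mu" and t: "tr_fun phi L {1} = (\<Sum>k\<in>{1}. phi (mu k))"
      using tr_fun_decomp[of "{1}" L phi] hL by auto
    have "L 1 1 = complex_of_real (mu 1)" using trace_X[OF _ d] by simp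
    hence "complex_of_real (rv 1 * rv 1) = complex_of_real (mu 1)" unfolding L_def .
    hence "mu 1 = x" using r1 of_real_eq_iff by metis
    thus ?thesis using t by simp
  qed
  have t2: "tr_fun phi L {2} = phi y"
  proof -
    obtain U mu where d: "spectral_decomp_on {2} L U mu" and t: "tr_fun phi L {2} = (\<Sum>k\<in>{2}. phi (mu k))"
      using tr_fun_decomp[of "{2}" L phi] hL by auto
    have "L 2 2 = complex_of_real (mu 2)" using trace_X[OF _ d] by simp
    hence "complex_of_real (rv 2 * rv 2) = complex_of_real (mu 2)" unfolding L_def .
    hence "mu 2 = y" using r2 of_real_eq_iff by metis
    thus ?thesis using t by simp
  qed
  have t12: "tr_fun phi L {1,2} = phi (x + y) + phi 0"
  proof -
    obtain U mu where d: "spectral_decomp_on {1,2} L U mu" and t: "tr_fun phi L {1,2} = (\<Sum>k\<in>{1,2}. phi (mu k))"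
      using tr_fun_decomp[of "{1,2}" L phi] hL by auto
    have "L 1 1 + L 2 2 = complex_of_real (mu 1 + mu 2)" using trace_X[OF _ d] by simp
    hence "complex_of_real (rv 1 * rv 1 + rv 2 * rv 2) = complex_of_real (mu 1 + mu 2)" unfolding L_def by simp
    hence s1: "mu 1 + mu 2 = x + y" using r1 r2 of_real_eq_iff by metis
    have "L 1 1 * L 1 1 + L 1 2 * L 2 1 + (L 2 1 * L 1 2 + L 2 2 * L 2 2) = complex_of_real ((mu 1)^2 + (mu 2)^2)"
      using sq_X[OF _ d] by simp
    hence "(rv 1 * rv 1) * (rv 1 * rv 1) + 2 * (rv 1 * rv 1) * (rv 2 * rv 2) + (rv 2 * rv 2) * (rv 2 * rv 2) = (mu 1)^2 + (mu 2)^2"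
      unfolding L_def by (simp flip: of_real_mult of_real_add)
    hence s2: "(x + y)^2 = (mu 1)^2 + (mu 2)^2" unfolding r1 r2 by (simp add: power2_eq_square algebra_simps)
    have "(mu 1 + mu 2)^2 = (mu 1)^2 + (mu 2)^2" using s1 s2 by simp
    hence "2 * mu 1 * mu 2 = 0" unfolding power2_sum by simp
    hence "mu 1 * mu 2 = 0" by simp
    hence "(mu 1 = 0 \<and> mu 2 = x + y) \<or> (mu 2 = 0 \<and> mu 1 = x + y)" using s1 by auto
    thus ?thesis using t by auto
  qed
  have t0: "tr_fun phi L {} = 0" unfolding tr_fun_def by simp
  have lm: "log_modular_on {1..N} (dkpp phi N L)" using H psd by blast
  have "ln (dkpp phi N L {1}) + ln (dkpp phi N L {2}) = ln (dkpp phi N L ({1} \<union> {2})) + ln (dkpp phi N L ({1} \<inter> {2}))"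
  proof -
    have "\<forall>S\<subseteq>{1..N}. \<forall>T\<subseteq>{1..N}. ln (dkpp phi N L S) + ln (dkpp phi N L T) = ln (dkpp phi N L (S \<union> T)) + ln (dkpp phi N L (S \<inter> T))"
      using lm unfolding log_modular_on_def modular_on_def by blast
    moreover have "{1::nat} \<subseteq> {1..N}" "{2::nat} \<subseteq> {1..N}" using N by auto
    ultimately show ?thesis by blast
  qed
  moreover have "{1::nat} \<union> {2} = {1,2}" "{1::nat} \<inter> {2} = {}" by auto
  ultimately have "ln (dkpp phi N L {1}) + ln (dkpp phi N L {2}) = ln (dkpp phi N L {1,2}) + ln (dkpp phi N L {})"
    by (simp only:)
  thus ?thesis unfolding ln_dkpp t1 t2 t12 t0 by linarith
qed

theorem mainTheorem4:
  fixes N :: nat and phi :: "real \<Rightarrow> real"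
  assumes "N \<ge> 2"
    and "continuous_on {0..} phi"
  shows "(\<forall>L. psd_hermitian_on {1..N} L \<longrightarrow> log_modular_on {1..N} (dkpp phi N L))
         \<longleftrightarrow> (\<exists>b c. \<forall>x\<ge>0. phi x = b * x + c)"
proof
  assume H: "\<forall>L. psd_hermitian_on {1..N} L \<longrightarrow> log_modular_on {1..N} (dkpp phi N L)"
  show "\<exists>b c. \<forall>x\<ge>0. phi x = b * x + c"
    by (rule cauchy_affine[OF assms(2)]) (rule backward_eq[OF assms(1) H])
next
  assume "\<exists>b c. \<forall>x\<ge>0. phi x = b * x + c"
  then obtain b c where "\<forall>x\<ge>0. phi x = b * x + c" by blast
  thus "\<forall>L. psd_hermitian_on {1..N} L \<longrightarrow> log_modular_on {1..N} (dkpp phi N L)"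
    using forward by blast
qed

end
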